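(* Let $\mathbb{T}^1$ be the one-dimensional connected compact torus (circle), equipped with a bi-invariant metric $d$ and Haar probability measure $\mu$. Let $\phi$ be a positive function on $\mathbb{T}^1$ and $\bar\phi=\int_{\mathbb{T}^1}\phi\circ g\,d\mu(g)$ its $\mathbb{T}^1$-average, regarded as a constant function. Assume $e^{-\kappa}\bar\phi\le\phi$. Then $$d_L(\phi\cdot\mu,\bar\phi\cdot\mu)\le\kappa\,\mathrm{diam}(\mathbb{T}^1).$$
   Context: The Lévy–Prokhorov distance between measures $\mu_1,\mu_2$ on a metric space is $d_L(\mu_1,\mu_2)=\inf\{\varepsilon>0:\ \mu_2(A_\varepsilon)\ge\mu_1(A)\ \text{for all subsets } A\}$, with $A_\varepsilon$ the $\varepsilon$-neighborhood of $A$. *)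

theory Defs
  imports "HOL-Analysis.Analysis"
begin

text \<open>Model of the circle T^1 = R/Z as the fundamental domain [0,1), with group
operation addition mod 1.\<close>

definition T1 :: "real set" where
  "T1 = {0..<1}"

definition haar_T1 :: "real measure" where
  "haar_T1 = restrict_space lborel T1"

text \<open>Bi-invariant (Riemannian) metric on T^1: arc-length metric of a circle of
total length L > 0.\<close>
definition T1_dist :: "real \<Rightarrow> real \<Rightarrow> real \<Rightarrow> real" where
  "T1_dist L x y = L * min \<bar>x - y\<bar> (1 - \<bar>x - y\<bar>)"

definition T1_diam :: "real \<Rightarrow> real" where
  "T1_diam L = Sup {T1_dist L x y | x y. x \<in> T1 \<and> y \<in> T1}"

definition LP_dist :: "('a \<Rightarrow> 'a \<Rightarrow> real) \<Rightarrow> 'a measure \<Rightarrow> 'a measure \<Rightarrow> real" where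
  "LP_dist d M1 M2 = Inf {\<epsilon>. \<epsilon> > 0 \<and>
     (\<forall>A \<in> sets M1. emeasure M2 {x \<in> space M2. \<exists>a\<in>A. d x a < \<epsilon>} \<ge> emeasure M1 A)}"

end

theory Submission
  imports Defs "HOL-Probability.Probability"
begin

definition d0 :: "real \<Rightarrow> real \<Rightarrow> real" where
  "d0 x y = min \<bar>x - y\<bar> (1 - \<bar>x - y\<bar>)"

definition sig :: "real \<Rightarrow> real" where
  "sig y = (if y < 1 then y else y - 1)"

lemma d0_sig:
  assumes "0 \<le> x0" "x0 < 1" "y \<in> {x0..x0+1}" "z \<in> {x0..x0+1}"
  shows "d0 (sig y) (sig z) \<le> \<bar>y - z\<bar>"
  using assms unfolding d0_def sig_def by (auto simp: abs_if min_def)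

lemma sig_range:
  assumes "0 \<le> x0" "x0 < 1" "y \<in> {x0..x0+1}"
  shows "sig y \<in> {0..<1}"
  using assms unfolding sig_def by auto

lemma translate_measure:
  fixes S :: "real set"
  assumes "S \<in> sets borel"
  shows "emeasure lborel {x. x + 1 \<in> S} = emeasure lborel S"
proof -
  have "emeasure lborel S = emeasure (distr lborel borel ((+) 1)) S"
    by (simp add: lborel_distr_plus)
  also have "\<dots> = emeasure lborel ((+) 1 -` S \<inter> space lborel)"
    using assms by (subst emeasure_distr) auto
  also have "(+) 1 -` S \<inter> space lborel = {x. x + 1 \<in> S}" by (auto simp: add.commute)
  finally show ?thesis by simp
qed

lemma key:
  fixes A :: "real set" and x0 r :: real
  assumes Asub: "A \<subseteq> {0..<1}" and x0: "x0 \<in> A" and r: "r > 0"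
    and Uc: "U = {x \<in> {0..<1}. \<exists>a\<in>A. d0 x a < r}"
    and Un: "U \<noteq> {0..<1}"
  shows "\<exists>k k'. k \<le> k' \<and> x0 + r \<le> k \<and> k' + r \<le> x0 + 1 \<and>
     (\<forall>y. y \<in> {k-r<..<k} \<union> {k'<..<k'+r} \<longrightarrow> sig y \<in> U - A)"
proof -
  have x01: "0 \<le> x0" "x0 < 1" using x0 Asub by auto
  define S where "S = {y \<in> {x0..x0+1}. sig y \<notin> U}"
  have US: "U \<subseteq> {0..<1}" using Uc by auto
  have "\<exists>u. u \<in> {0..<1} \<and> u \<notin> U" using Un US by (meson subsetI subset_antisym)
  then obtain u where u: "u \<in> {0..<1}" "u \<notin> U" by blast
  have "sig (if u \<ge> x0 then u else u + 1) = u" using u x01 by (auto simp: sig_def)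
  moreover have "(if u \<ge> x0 then u else u + 1) \<in> {x0..x0+1}" using u x01 by auto
  ultimately have "(if u \<ge> x0 then u else u + 1) \<in> S" using u unfolding S_def by simp
  then have Sne: "S \<noteq> {}" by blast
  have Sb: "S \<subseteq> {x0..x0+1}" unfolding S_def by auto
  have bb: "bdd_below S" "bdd_above S" using Sb by (auto intro!: bdd_belowI bdd_aboveI)
  define k where "k = Inf S"
  define k' where "k' = Sup S"
  have kk: "k \<le> k'" unfolding k_def k'_def using Sne bb by (meson cInf_le_cSup)
  have kge: "x0 \<le> k" unfolding k_def using Sne Sb by (auto intro!: cInf_greatest)
  have kle: "k' \<le> x0 + 1" unfolding k'_def using Sne Sb by (auto intro!: cSup_least)
  have inU: "sig y \<in> U" if "y \<in> {x0..x0+1}" "\<bar>y - z\<bar> < r" "z \<in> {x0..x0+1}" "sig z \<in> A" for y z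
  proof -
    have "d0 (sig y) (sig z) < r" using d0_sig[OF x01 that(1) that(3)] that(2) by linarith
    then show ?thesis using Uc sig_range[OF x01 that(1)] that(4) by auto
  qed
  have C1: "sig z \<notin> A" if "z \<in> {x0..x0+1}" "\<bar>k - z\<bar> < r" for z
  proof
    assume zA: "sig z \<in> A"
    have "Inf S < z + r" using that unfolding k_def by linarith
    then obtain y where y: "y \<in> S" "y < z + r" using Sne by (meson cInf_lessD)
    have "k \<le> y" unfolding k_def using y bb by (meson cInf_lower)
    then have "\<bar>y - z\<bar> < r" using y that by linarith
    then have "sig y \<in> U" using inU[OF _ _ that(1) zA] y Sb by auto
    then show False using y unfolding S_def by auto
  qed
  have C2: "sig z \<notin> A" if "z \<in> {x0..x0+1}" "\<bar>k' - z\<bar> < r" for z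
  proof
    assume zA: "sig z \<in> A"
    have "z - r < Sup S" using that unfolding k'_def by linarith
    then obtain y where y: "y \<in> S" "z - r < y" using Sne by (meson less_cSupD)
    have "y \<le> k'" unfolding k'_def using y bb by (meson cSup_upper)
    then have "\<bar>y - z\<bar> < r" using y that by linarith
    then have "sig y \<in> U" using inU[OF _ _ that(1) zA] y Sb by auto
    then show False using y unfolding S_def by auto
  qed
  have C3: "sig y \<in> U" if "y \<in> {x0..x0+1}" "y < k \<or> k' < y" for y
  proof (rule ccontr)
    assume "sig y \<notin> U"
    then have yS: "y \<in> S" using that unfolding S_def by auto
    have "k \<le> y" unfolding k_def using yS bb by (meson cInf_lower)
    moreover have "y \<le> k'" unfolding k'_def using yS bb by (meson cSup_upper)
    ultimately show False using that by linarith
  qed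
  have sx0: "sig x0 = x0" "sig (x0 + 1) = x0" using x01 by (auto simp: sig_def)
  have "\<not> \<bar>k - x0\<bar> < r" using C1[of x0] sx0 x0 x01 by auto
  then have k1: "x0 + r \<le> k" using kge by linarith
  have "\<not> \<bar>k' - (x0+1)\<bar> < r" using C2[of "x0+1"] sx0 x0 x01 by auto
  then have k2: "k' + r \<le> x0 + 1" using kle by linarith
  have "\<forall>y. y \<in> {k-r<..<k} \<union> {k'<..<k'+r} \<longrightarrow> sig y \<in> U - A"
  proof (intro allI impI)
    fix y assume y: "y \<in> {k-r<..<k} \<union> {k'<..<k'+r}"
    then have yr: "y \<in> {x0..x0+1}" using k1 k2 kk by auto
    have "sig y \<in> U" using C3[OF yr] y by auto
    moreover have "sig y \<notin> A"
    proof (cases "y < k")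
      case True then show ?thesis using C1[OF yr] y kk by auto
    next
      case False then show ?thesis using C2[OF yr] y by auto
    qed
    ultimately show "sig y \<in> U - A" by auto
  qed
  then show ?thesis using kk k1 k2 by blast
qed

lemma open_d0: "open {x. \<exists>a\<in>A. d0 x a < r}"
proof -
  have "{x. \<exists>a\<in>A. d0 x a < r} = (\<Union>a\<in>A. {x. d0 x a < r})" by auto
  moreover have "open {x. d0 x a < r}" for a
    unfolding d0_def by (intro open_Collect_less continuous_intros)
  ultimately show ?thesis by auto
qed

lemma key2:
  fixes A :: "real set" and x0 r :: real
  assumes Asub: "A \<subseteq> {0..<1}" and Am: "A \<in> sets lborel" and x0: "x0 \<in> A" and r: "r > 0"
    and Uc: "U = {x \<in> {0..<1}. \<exists>a\<in>A. d0 x a < r}"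
    and Un: "U \<noteq> {0..<1}"
  shows "emeasure lborel U \<ge> emeasure lborel A + ennreal (2 * r)"
proof -
  obtain k k' where kk: "k \<le> k'" "x0 + r \<le> k" "k' + r \<le> x0 + 1"
    and W: "\<And>y. y \<in> {k-r<..<k} \<union> {k'<..<k'+r} \<Longrightarrow> sig y \<in> U - A"
    using key[OF Asub x0 r Uc Un] by blast
  have x01: "0 \<le> x0" "x0 < 1" using x0 Asub by auto
  define W where "W = {k-r<..<k} \<union> {k'<..<k'+r}"
  define V1 where "V1 = W \<inter> {..<1}"
  define V2 where "V2 = {x. x + 1 \<in> W \<inter> {1..}}"
  have Wm[measurable]: "W \<in> sets borel" unfolding W_def by auto
  have V1m[measurable]: "V1 \<in> sets borel" unfolding V1_def by auto
  have V2m[measurable]: "V2 \<in> sets borel" unfolding V2_def by measurable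
  have Um[measurable]: "U \<in> sets borel"
  proof -
    have "U = {0..<1} \<inter> {x. \<exists>a\<in>A. d0 x a < r}" using Uc by auto
    then show ?thesis using open_d0[of A r] by (auto intro: borel_open)
  qed
  have Wsub: "W \<subseteq> {x0..<x0+1}" unfolding W_def using kk r by auto
  have V1sub: "V1 \<subseteq> U - A"
  proof
    fix x assume "x \<in> V1"
    then have "x \<in> W" "x < 1" unfolding V1_def by auto
    then show "x \<in> U - A" using W[of x] unfolding W_def sig_def by auto
  qed
  have V2sub: "V2 \<subseteq> U - A"
  proof
    fix x assume "x \<in> V2"
    then have "x + 1 \<in> W" "x + 1 \<ge> 1" unfolding V2_def by auto
    then show "x \<in> U - A" using W[of "x+1"] unfolding W_def sig_def by auto
  qed
  have Wb: "\<forall>x\<in>W. x0 \<le> x \<and> x < x0+1" using Wsub by auto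
  have V12: "V1 \<inter> V2 = {}" unfolding V1_def V2_def
  proof safe
    fix x assume "x \<in> W" "x + 1 \<in> W"
    then have "x0 \<le> x" "x + 1 < x0 + 1" using Wb by blast+
    then show "x \<in> {}" by linarith
  qed
  have AU: "A \<subseteq> U"
  proof
    fix x assume "x \<in> A"
    moreover have "d0 x x < r" using r by (simp add: d0_def)
    ultimately show "x \<in> U" using Uc Asub by blast
  qed
  have "emeasure lborel W = emeasure lborel {k-r<..<k} + emeasure lborel {k'<..<k'+r}"
    unfolding W_def using kk by (intro plus_emeasure[symmetric]) auto
  also have "\<dots> = ennreal (2 * r)" using r by (simp add: ennreal_plus[symmetric] del: ennreal_plus)
  finally have mW: "emeasure lborel W = ennreal (2 * r)" .
  have "emeasure lborel W = emeasure lborel (W \<inter> {..<1}) + emeasure lborel (W \<inter> {1..})"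
    by (subst plus_emeasure) (auto intro: arg_cong[where f="emeasure lborel"])
  also have "emeasure lborel (W \<inter> {1..}) = emeasure lborel V2"
    unfolding V2_def by (rule translate_measure[symmetric]) auto
  also have "emeasure lborel (W \<inter> {..<1}) + emeasure lborel V2 = emeasure lborel (V1 \<union> V2)"
    unfolding V1_def[symmetric] using V12 by (intro plus_emeasure) auto
  finally have mV: "emeasure lborel (V1 \<union> V2) = ennreal (2 * r)" using mW by simp
  have "emeasure lborel A + emeasure lborel (V1 \<union> V2) = emeasure lborel (A \<union> (V1 \<union> V2))"
    using V1sub V2sub Am by (intro plus_emeasure) auto
  also have "\<dots> \<le> emeasure lborel U"
    using V1sub V2sub AU by (intro emeasure_mono) auto
  finally show ?thesis using mV by simp
qed

lemma mu_facts:
  shows "space haar_T1 = {0..<1}"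
    and "\<And>A. A \<in> sets haar_T1 \<longleftrightarrow> A \<subseteq> {0..<1} \<and> A \<in> sets lborel"
    and "\<And>A. A \<in> sets haar_T1 \<Longrightarrow> emeasure haar_T1 A = emeasure lborel A"
    and "prob_space haar_T1"
  unfolding haar_T1_def T1_def
  by (auto simp: sets_restrict_space_iff emeasure_restrict_space intro!: prob_space_restrict_space)

lemma diam_ge: "L > 0 \<Longrightarrow> T1_diam L \<ge> L / 2"
proof -
  assume L: "L > 0"
  let ?S = "{T1_dist L x y | x y. x \<in> T1 \<and> y \<in> T1}"
  have "L / 2 = T1_dist L 0 (1/2)" unfolding T1_dist_def by simp
  then have "L / 2 \<in> ?S" unfolding T1_def by force
  moreover have "bdd_above ?S"
  proof (rule bdd_aboveI)
    fix z assume "z \<in> ?S"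
    then obtain x y where "z = T1_dist L x y" by blast
    then show "z \<le> L / 2" unfolding T1_dist_def using L
      by (auto simp: min_def)
  qed
  ultimately show ?thesis unfolding T1_diam_def by (rule cSup_upper)
qed

lemma inner:
  fixes L \<kappa> \<epsilon> :: real and \<phi> :: "real \<Rightarrow> real" and A :: "real set"
  assumes L: "L > 0"
    and phim[measurable]: "\<phi> \<in> borel_measurable haar_T1"
    and int: "integrable haar_T1 \<phi>"
    and pos: "\<forall>x\<in>T1. \<phi> x > 0"
    and lb: "\<forall>x\<in>T1. exp (- \<kappa>) * (\<integral>g. \<phi> g \<partial>haar_T1) \<le> \<phi> x"
    and kap: "\<kappa> \<ge> 0" and eps: "\<epsilon> > \<kappa> * L / 2"
    and A: "A \<in> sets haar_T1"
  defines "c \<equiv> (\<integral>g. \<phi> g \<partial>haar_T1)"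
  defines "U \<equiv> {x \<in> {0..<1}. \<exists>a\<in>A. T1_dist L x a < \<epsilon>}"
  shows "(\<integral>x. \<phi> x * indicator A x \<partial>haar_T1) \<le> c * measure haar_T1 U"
proof -
  interpret P: prob_space haar_T1 by (rule mu_facts(4))
  note sp = mu_facts(1)
  have Asub: "A \<subseteq> {0..<1}" and Al: "A \<in> sets lborel" using A mu_facts(2) by auto
  define r where "r = \<epsilon> / L"
  have Ud: "U = {x \<in> {0..<1}. \<exists>a\<in>A. d0 x a < r}"
    unfolding U_def r_def T1_dist_def d0_def using L by (simp add: field_simps mult.commute)
  have Um: "U \<in> sets lborel"
  proof -
    have "U = {0..<1} \<inter> {x. \<exists>a\<in>A. d0 x a < r}" using Ud by auto
    then show ?thesis using open_d0[of A r] by (auto intro: borel_open)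
  qed
  have UH: "U \<in> sets haar_T1" using Um Ud mu_facts(2) by auto
  define Ac where "Ac = {0..<1} - A"
  have AcH: "Ac \<in> sets haar_T1"
  proof -
    have "Ac = space haar_T1 - A" unfolding Ac_def using sp by simp
    then show ?thesis using A by simp
  qed
  have phinn: "\<phi> x \<ge> 0" if "x \<in> space haar_T1" for x
  proof -
    have "x \<in> T1" using that sp unfolding T1_def by simp
    then show ?thesis using pos less_imp_le by blast
  qed
  have cnn: "c \<ge> 0" unfolding c_def using phinn by (simp add: integral_nonneg)
  have split: "c = (\<integral>x. \<phi> x * indicator A x \<partial>haar_T1) + (\<integral>x. \<phi> x * indicator Ac x \<partial>haar_T1)"
  proof -
    have "c = (\<integral>x. \<phi> x * indicator A x + \<phi> x * indicator Ac x \<partial>haar_T1)"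
      unfolding c_def
      using Asub by (intro Bochner_Integration.integral_cong) (auto simp: Ac_def sp indicator_def)
    also have "\<dots> = (\<integral>x. \<phi> x * indicator A x \<partial>haar_T1) + (\<integral>x. \<phi> x * indicator Ac x \<partial>haar_T1)"
      using int A AcH by (intro Bochner_Integration.integral_add integrable_real_mult_indicator) auto
    finally show ?thesis .
  qed
  have lowAc: "exp (- \<kappa>) * c * measure haar_T1 Ac \<le> (\<integral>x. \<phi> x * indicator Ac x \<partial>haar_T1)"
  proof -
    have "exp (- \<kappa>) * c * measure haar_T1 Ac = (\<integral>x. exp (- \<kappa>) * c * indicator Ac x \<partial>haar_T1)"
      using AcH by simp
    also have "\<dots> \<le> (\<integral>x. \<phi> x * indicator Ac x \<partial>haar_T1)"
    proof (rule integral_mono)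
      show "integrable haar_T1 (\<lambda>x. exp (- \<kappa>) * c * indicator Ac x)"
        using AcH by (intro integrable_real_mult_indicator) auto
      show "integrable haar_T1 (\<lambda>x. \<phi> x * indicator Ac x)"
        using AcH int by (intro integrable_real_mult_indicator) auto
      fix x assume "x \<in> space haar_T1"
      then show "exp (- \<kappa>) * c * indicator Ac x \<le> \<phi> x * indicator Ac x"
        using lb sp unfolding c_def T1_def by (auto simp: indicator_def)
    qed
    finally show ?thesis .
  qed
  have mAc: "measure haar_T1 Ac = 1 - measure haar_T1 A"
    using P.prob_compl[OF A] sp unfolding Ac_def by simp
  define a where "a = measure haar_T1 A"
  have a01: "0 \<le> a" "a \<le> 1" unfolding a_def by auto
  have IA: "(\<integral>x. \<phi> x * indicator A x \<partial>haar_T1) \<le> c - exp (- \<kappa>) * c * (1 - a)"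
  proof -
    have "exp (- \<kappa>) * c * (1 - a) \<le> (\<integral>x. \<phi> x * indicator Ac x \<partial>haar_T1)"
      using lowAc mAc unfolding a_def by simp
    then show ?thesis using split by linarith
  qed
  have e1: "exp (- \<kappa>) * c * (1 - a) \<ge> 0" using cnn a01 by simp
  show ?thesis
  proof (cases "A = {}")
    case True
    then show ?thesis using cnn by simp
  next
    case False
    then obtain x0 where x0: "x0 \<in> A" by blast
    show ?thesis
    proof (cases "U = {0..<1}")
      case True
      then have "measure haar_T1 U = 1" using P.prob_space sp by simp
      then show ?thesis using IA e1 by simp
    next
      case False
      have r: "r > 0"
      proof -
        have "\<kappa> * L \<ge> 0" using kap L by simp
        then have "\<epsilon> > 0" using eps by linarith
        then show ?thesis unfolding r_def using L by simp
      qed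
      have "emeasure lborel U \<ge> emeasure lborel A + ennreal (2 * r)"
        by (rule key2[OF Asub Al x0 r Ud False])
      then have "emeasure haar_T1 U \<ge> emeasure haar_T1 A + ennreal (2 * r)"
        using mu_facts(3) A UH by simp
      then have u: "measure haar_T1 U \<ge> a + 2 * r"
        unfolding a_def using r
        by (simp add: P.emeasure_eq_measure ennreal_plus[symmetric] del: ennreal_plus)
      have rk: "2 * r > \<kappa>" unfolding r_def using eps L by (simp add: field_simps)
      have t: "1 - exp (- \<kappa>) \<le> \<kappa>" using exp_ge_add_one_self[of "- \<kappa>"] by linarith
      have t0: "0 \<le> 1 - exp (- \<kappa>)" using kap by simp
      have "(1 - a) * (1 - exp (- \<kappa>)) \<le> 1 - exp (- \<kappa>)"
        using a01 t0 by (simp add: mult_left_le_one_le)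
      then have "1 - exp (- \<kappa>) * (1 - a) \<le> measure haar_T1 U"
      proof -
        have "1 - exp (- \<kappa>) * (1 - a) = a + (1 - a) * (1 - exp (- \<kappa>))"
          by (simp add: algebra_simps)
        then show ?thesis using u rk t \<open>(1 - a) * (1 - exp (- \<kappa>)) \<le> 1 - exp (- \<kappa>)\<close> by linarith
      qed
      then have "c * (1 - exp (- \<kappa>) * (1 - a)) \<le> c * measure haar_T1 U"
        using cnn by (rule mult_left_mono)
      then show ?thesis using IA by (simp add: algebra_simps)
    qed
  qed
qed

theorem lemma18p0p7:
  fixes L \<kappa> :: real and \<phi> :: "real \<Rightarrow> real"
  assumes "L > 0"
    and "\<phi> \<in> borel_measurable haar_T1"
    and "integrable haar_T1 \<phi>"
    and "\<forall>x\<in>T1. \<phi> x > 0"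
    and "\<forall>x\<in>T1. exp (- \<kappa>) * (\<integral>g. \<phi> g \<partial>haar_T1) \<le> \<phi> x"
  shows "LP_dist (T1_dist L)
           (density haar_T1 (\<lambda>x. ennreal (\<phi> x)))
           (density haar_T1 (\<lambda>x. ennreal (\<integral>g. \<phi> g \<partial>haar_T1)))
         \<le> \<kappa> * T1_diam L"
proof -
  note L = assms(1) and phim[measurable] = assms(2) and int = assms(3) and pos = assms(4) and lb = assms(5)
  interpret P: prob_space haar_T1 by (rule mu_facts(4))
  note sp = mu_facts(1)
  define c where "c = (\<integral>g. \<phi> g \<partial>haar_T1)"
  have phinn: "\<phi> x \<ge> 0" if "x \<in> space haar_T1" for x
  proof -
    have "x \<in> T1" using that sp unfolding T1_def by simp
    then show ?thesis using pos less_imp_le by blast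
  qed
  have cpos: "c > 0"
  proof -
    have cnn: "c \<ge> 0" unfolding c_def using phinn by (simp add: integral_nonneg)
    moreover have "c \<noteq> 0"
    proof
      assume "c = 0"
      then have "AE x in haar_T1. \<phi> x = 0" unfolding c_def
        using integral_nonneg_eq_0_iff_AE[OF int] phinn by auto
      moreover have "AE x in haar_T1. \<phi> x \<noteq> 0"
      proof (rule AE_I2)
        fix x assume "x \<in> space haar_T1"
        then have "x \<in> T1" using sp unfolding T1_def by simp
        then show "\<phi> x \<noteq> 0" using pos by force
      qed
      ultimately have "AE x in haar_T1. False" by eventually_elim auto
      then show False by simp
    qed
    ultimately show ?thesis by simp
  qed
  have kap: "\<kappa> \<ge> 0"
  proof -
    have "exp (- \<kappa>) * c = (\<integral>x. exp (- \<kappa>) * c \<partial>haar_T1)" using P.prob_space by simp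
    also have "\<dots> \<le> c" unfolding c_def
    proof (rule integral_mono)
      show "integrable haar_T1 (\<lambda>x. exp (- \<kappa>) * (\<integral>g. \<phi> g \<partial>haar_T1))" by simp
      show "integrable haar_T1 \<phi>" by (rule int)
      fix x assume "x \<in> space haar_T1"
      then have "x \<in> T1" using sp unfolding T1_def by simp
      then show "exp (- \<kappa>) * (\<integral>g. \<phi> g \<partial>haar_T1) \<le> \<phi> x" using lb by blast
    qed
    finally have "exp (- \<kappa>) \<le> 1" using cpos by simp
    then show ?thesis by simp
  qed
  define M1 where "M1 = density haar_T1 (\<lambda>x. ennreal (\<phi> x))"
  define M2 where "M2 = density haar_T1 (\<lambda>x. ennreal c)"
  define E where "E = {\<epsilon>. \<epsilon> > 0 \<and>
     (\<forall>A \<in> sets M1. emeasure M2 {x \<in> space M2. \<exists>a\<in>A. T1_dist L x a < \<epsilon>} \<ge> emeasure M1 A)}"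
  have inE: "\<epsilon> \<in> E" if eps: "\<epsilon> > \<kappa> * L / 2" for \<epsilon>
  proof -
    have "\<kappa> * L \<ge> 0" using kap L by simp
    then have epos: "\<epsilon> > 0" using eps by linarith
    have "emeasure M2 {x \<in> space M2. \<exists>a\<in>A. T1_dist L x a < \<epsilon>} \<ge> emeasure M1 A"
      if A: "A \<in> sets M1" for A
    proof -
      have AH: "A \<in> sets haar_T1" using A unfolding M1_def by simp
      define U where "U = {x \<in> {0..<1}. \<exists>a\<in>A. T1_dist L x a < \<epsilon>}"
      have UU: "{x \<in> space M2. \<exists>a\<in>A. T1_dist L x a < \<epsilon>} = U"
        unfolding U_def M2_def using sp by simp
      have inn: "(\<integral>x. \<phi> x * indicator A x \<partial>haar_T1) \<le> c * measure haar_T1 U"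
        unfolding U_def c_def by (rule inner[OF L phim int pos lb kap eps AH])
      have UH: "U \<in> sets haar_T1"
      proof -
        have Asub: "A \<subseteq> {0..<1}" using AH mu_facts(2) by auto
        have "U = {x \<in> {0..<1}. \<exists>a\<in>A. d0 x a < \<epsilon> / L}"
          unfolding U_def T1_dist_def d0_def using L by (simp add: field_simps mult.commute)
        then have "U = {0..<1} \<inter> {x. \<exists>a\<in>A. d0 x a < \<epsilon> / L}" by auto
        then have "U \<in> sets lborel" using open_d0[of A "\<epsilon> / L"] by (auto intro: borel_open)
        then show ?thesis using mu_facts(2) U_def by auto
      qed
      have "emeasure M1 A = (\<integral>\<^sup>+ x. ennreal (\<phi> x) * indicator A x \<partial>haar_T1)"
        unfolding M1_def using AH by (simp add: emeasure_density)
      also have "\<dots> = (\<integral>\<^sup>+ x. ennreal (\<phi> x * indicator A x) \<partial>haar_T1)"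
        by (simp add: nn_integral_set_ennreal)
      also have "\<dots> = ennreal (\<integral>x. \<phi> x * indicator A x \<partial>haar_T1)"
        using AH int phinn
        by (intro nn_integral_eq_integral integrable_real_mult_indicator AE_I2) (auto simp: indicator_def)
      finally have e1: "emeasure M1 A = ennreal (\<integral>x. \<phi> x * indicator A x \<partial>haar_T1)" .
      have "emeasure M2 U = (\<integral>\<^sup>+ x. ennreal c * indicator U x \<partial>haar_T1)"
        unfolding M2_def using UH by (simp add: emeasure_density)
      also have "\<dots> = ennreal c * emeasure haar_T1 U" using UH by (rule nn_integral_cmult_indicator)
      also have "\<dots> = ennreal (c * measure haar_T1 U)"
        using cpos by (simp add: P.emeasure_eq_measure ennreal_mult)
      finally have e2: "emeasure M2 U = ennreal (c * measure haar_T1 U)" .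
      show ?thesis unfolding UU e1 e2 using inn by (rule ennreal_leI)
    qed
    then show ?thesis unfolding E_def using epos by blast
  qed
  have bE: "bdd_below E" unfolding E_def by (rule bdd_belowI[of _ 0]) auto
  have "Inf E \<le> \<kappa> * L / 2"
  proof (rule field_le_epsilon)
    fix e :: real assume "e > 0"
    then have "\<kappa> * L / 2 + e \<in> E" by (intro inE) simp
    then show "Inf E \<le> \<kappa> * L / 2 + e" using bE by (rule cInf_lower)
  qed
  also have "\<kappa> * L / 2 \<le> \<kappa> * T1_diam L"
    using mult_left_mono[OF diam_ge[OF L] kap] by simp
  finally show ?thesis unfolding LP_dist_def E_def M1_def M2_def c_def .
qed

end
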